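(* For every information structure $\mathbf q$ (with $\mathbb E[\mathbf q]=p_0$), the following three conditions are equivalent: (i) $\mathrm{VoI}_A(\mathbf q)=0$; (ii) there exists $a^\star\in A^\star(p_0)$ such that $a^\star\in A^\star(\mathbf q)$ $\mathbb P$-almost surely; (iii) $\mathbf q\in \Delta^{c}_A(p_0)$ $\mathbb P$-almost surely.
   Context: Let $K$ be a finite set of states of nature. Signed measures on $K$ are identified with $\mathbb R^K$, with scalar product $\langle s,v\rangle=\sum_{k\in K}s_kv_k$ and Euclidean norm $\|\cdot\|$. Let $\Delta\subset\mathbb R^K$ be the simplex of probability distributions on $K$, and fix a prior $p_0\in\Delta$ with full support. The action set $A\subset\mathbb R^K$ is the closed convex hull $\overline{\mathrm{co}}\{(g(d,k))_{k\in K}: d\in D\}$ for a compact set $D$ and a continuous $g:D\times K\to\mathbb R$; in particular $A$ is a nonempty compact convex subset of $\mathbb R^K$. The value function is $v_A(p)=\max_{a\in A}\langle p,a\rangle$ for $p\in\Delta$. For $p\in\Delta$, the set of optimal actions is $A^\star(p)=\{a\in A:\langle p,a'\rangle\le\langle p,a\rangle\ \forall a'\in A\}$. For $a\in A$, the set of beliefs revealed by $a$ is $\Delta^\star_A(a)=\{p\in\Delta:\langle p,a'\rangle\le\langle p,a\rangle\ \forall a'\in A\}$. The confidence set of $p_0$ is $\Delta^c_A(p_0)=\bigcap_{a\in A^\star(p_0)}\Delta^\star_A(a)$. An information structure is a random variable $\mathbf q$ defined on a probability space $(\Omega,\mathcal F,\mathbb P)$ with values in $\Delta$ such that $\mathbb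 E[\mathbf q]=p_0$. The value of information is $\mathrm{VoI}_A(\mathbf q)=\mathbb E[v_A(\mathbf q)]-v_A(p_0)$. *)

theory Defs
  imports "HOL-Analysis.Analysis" "HOL-Probability.Probability"
begin

text \<open>Signed measures on the finite state space K are vectors in real^'k;
  the scalar product is the inner product (sum over k of s_k v_k).\<close>

definition prob_simplex :: "(real^'k::finite) set" where
  "prob_simplex = {p. (\<forall>k. 0 \<le> p $ k) \<and> (\<Sum>k\<in>UNIV. p $ k) = 1}"

definition action_set :: "'d::topological_space set \<Rightarrow> ('d \<Rightarrow> 'k::finite \<Rightarrow> real) \<Rightarrow> (real^'k) set" where
  "action_set D g = closure (convex hull ((\<lambda>d. \<chi> k. g d k) ` D))"

definition vA :: "(real^'k::finite) set \<Rightarrow> real^'k \<Rightarrow> real" where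
  "vA A p = (SUP a\<in>A. p \<bullet> a)"

definition Astar :: "(real^'k::finite) set \<Rightarrow> real^'k \<Rightarrow> (real^'k) set" where
  "Astar A p = {a\<in>A. \<forall>a'\<in>A. p \<bullet> a' \<le> p \<bullet> a}"

definition Deltastar :: "(real^'k::finite) set \<Rightarrow> real^'k \<Rightarrow> (real^'k) set" where
  "Deltastar A a = {p\<in>prob_simplex. \<forall>a'\<in>A. p \<bullet> a' \<le> p \<bullet> a}"

definition Deltac :: "(real^'k::finite) set \<Rightarrow> real^'k \<Rightarrow> (real^'k) set" where
  "Deltac A p0 = (\<Inter>a\<in>Astar A p0. Deltastar A a)"

definition info_structure :: "'w measure \<Rightarrow> ('w \<Rightarrow> real^'k::finite) \<Rightarrow> real^'k \<Rightarrow> bool" where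
  "info_structure M q p0 \<longleftrightarrow> prob_space M \<and> (\<forall>\<omega>\<in>space M. q \<omega> \<in> prob_simplex)
     \<and> (\<forall>k. (\<lambda>\<omega>. q \<omega> $ k) \<in> borel_measurable M)
     \<and> (\<forall>k. (\<integral>\<omega>. q \<omega> $ k \<partial>M) = p0 $ k)"

definition VoI :: "(real^'k::finite) set \<Rightarrow> 'w measure \<Rightarrow> ('w \<Rightarrow> real^'k) \<Rightarrow> real^'k \<Rightarrow> real" where
  "VoI A M q p0 = (\<integral>\<omega>. vA A (q \<omega>) \<partial>M) - vA A p0"

end

theory Submission
  imports Defs
begin

lemma A_compact:
  fixes D :: "'d::topological_space set" and g :: "'d \<Rightarrow> 'k::finite \<Rightarrow> real"
  assumes "compact D" "\<And>k. continuous_on D (\<lambda>d. g d k)"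
  shows "compact (action_set D g)"
proof -
  have "continuous_on D (\<lambda>d. \<chi> k. g d k)"
    using assms(2) by (intro continuous_on_vec_lambda) auto
  then have "compact ((\<lambda>d. \<chi> k. g d k) ` D)"
    using assms(1) compact_continuous_image by blast
  then have "compact (convex hull ((\<lambda>d. \<chi> k. g d k) ` D))"
    using compact_convex_hull by blast
  then show ?thesis unfolding action_set_def
    by (simp add: closure_closed compact_imp_closed)
qed

lemma A_nonempty:
  assumes "D \<noteq> {}" shows "action_set D g \<noteq> {}"
  using assms unfolding action_set_def
  by (metis closure_eq_empty convex_hull_eq_empty image_is_empty)

lemma Astar_ne:
  fixes A :: "(real^'k::finite) set"
  assumes "compact A" "A \<noteq> {}"
  shows "\<exists>a. a \<in> Astar A p"
proof -
  have "continuous_on A (\<lambda>a. p \<bullet> a)" by (intro continuous_intros)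
  then obtain a where "a \<in> A" "\<forall>a'\<in>A. p \<bullet> a' \<le> p \<bullet> a"
    using continuous_attains_sup[OF assms] by metis
  then show ?thesis unfolding Astar_def by blast
qed

lemma vA_eq:
  fixes A :: "(real^'k::finite) set"
  assumes "a \<in> Astar A p"
  shows "vA A p = p \<bullet> a"
proof -
  have aA: "a \<in> A" and le: "\<forall>a'\<in>A. p \<bullet> a' \<le> p \<bullet> a" using assms unfolding Astar_def by auto
  show ?thesis unfolding vA_def
    by (rule cSup_eq_maximum) (use aA le in auto)
qed

lemma vA_ge:
  fixes A :: "(real^'k::finite) set"
  assumes "compact A" "A \<noteq> {}" "a \<in> A"
  shows "p \<bullet> a \<le> vA A p"
proof -
  obtain b where b: "b \<in> Astar A p" using Astar_ne[OF assms(1,2)] by blast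
  then show ?thesis using assms(3) vA_eq[OF b] unfolding Astar_def by auto
qed

lemma vA_bound:
  fixes A :: "(real^'k::finite) set"
  assumes "compact A" "A \<noteq> {}" "\<forall>a\<in>A. norm a \<le> B"
  shows "\<bar>vA A p\<bar> \<le> norm p * B"
proof -
  obtain b where b: "b \<in> Astar A p" using Astar_ne[OF assms(1,2)] by blast
  have "b \<in> A" using b unfolding Astar_def by auto
  have "\<bar>p \<bullet> b\<bar> \<le> norm p * norm b" by (rule Cauchy_Schwarz_ineq2)
  also have "\<dots> \<le> norm p * B" using assms(3) \<open>b \<in> A\<close> by (simp add: mult_left_mono)
  finally show ?thesis using vA_eq[OF b] by simp
qed

lemma vA_lip:
  fixes A :: "(real^'k::finite) set"
  assumes "compact A" "A \<noteq> {}" "\<forall>a\<in>A. norm a \<le> B"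
  shows "vA A p - vA A p' \<le> B * norm (p - p')"
proof -
  obtain b where b: "b \<in> Astar A p" using Astar_ne[OF assms(1,2)] by blast
  have bA: "b \<in> A" using b unfolding Astar_def by auto
  have "vA A p = p' \<bullet> b + (p - p') \<bullet> b" using vA_eq[OF b] by (simp add: inner_diff_left)
  also have "\<dots> \<le> vA A p' + norm (p - p') * norm b"
    using vA_ge[OF assms(1,2) bA, of p'] Cauchy_Schwarz_ineq2[of "p - p'" b] by linarith
  also have "\<dots> \<le> vA A p' + B * norm (p - p')"
    proof -
      have "norm b \<le> B" using assms(3) bA by blast
      then have "norm (p - p') * norm b \<le> norm (p - p') * B" by (rule mult_left_mono) simp
      then show ?thesis by (simp add: mult.commute)
    qed
  finally show ?thesis by simp
qed

lemma vA_cont: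
  fixes A :: "(real^'k::finite) set"
  assumes "compact A" "A \<noteq> {}"
  shows "continuous_on UNIV (vA A)"
proof -
  obtain B where B: "\<forall>a\<in>A. norm a \<le> B" "B \<ge> 0"
  proof -
    obtain B0 where "\<forall>a\<in>A. norm a \<le> B0"
      using compact_imp_bounded[OF assms(1)] unfolding bounded_iff by blast
    then have "\<forall>a\<in>A. norm a \<le> max B0 0" "max B0 0 \<ge> 0" by auto
    then show ?thesis using that by blast
  qed
  have "B-lipschitz_on UNIV (vA A)"
  proof (rule lipschitz_onI)
    fix x y :: "real^'k"
    have "vA A x - vA A y \<le> B * norm (x - y)" by (rule vA_lip[OF assms B(1)])
    moreover have "vA A y - vA A x \<le> B * norm (y - x)" by (rule vA_lip[OF assms B(1)])
    ultimately show "dist (vA A x) (vA A y) \<le> B * dist x y"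
      by (simp add: dist_real_def dist_norm norm_minus_commute abs_le_iff)
  qed (use B in auto)
  then show ?thesis by (rule lipschitz_on_continuous_on)
qed

lemma Astar_closed:
  fixes A :: "(real^'k::finite) set"
  assumes "closed A"
  shows "closed (Astar A p)"
proof -
  have "Astar A p = A \<inter> (\<Inter>a'\<in>A. {a. p \<bullet> a' \<le> p \<bullet> a})" unfolding Astar_def by auto
  moreover have "closed (\<Inter>a'\<in>A. {a. p \<bullet> a' \<le> p \<bullet> a})"
    by (intro closed_INT ballI closed_halfspace_ge)
  ultimately show ?thesis using assms by auto
qed


theorem proposition3p1:
  fixes D :: "'d::topological_space set" and g :: "'d \<Rightarrow> 'k::finite \<Rightarrow> real"
    and p0 :: "real^'k" and M :: "'w measure" and q :: "'w \<Rightarrow> real^'k"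
  assumes "compact D" and "D \<noteq> {}"
    and "\<And>k. continuous_on D (\<lambda>d. g d k)"
    and "p0 \<in> prob_simplex" and "\<And>k. p0 $ k > 0"
    and "info_structure M q p0"
  defines "A \<equiv> action_set D g"
  shows "(VoI A M q p0 = 0 \<longleftrightarrow> (\<exists>a\<in>Astar A p0. AE \<omega> in M. a \<in> Astar A (q \<omega>)))
       \<and> ((\<exists>a\<in>Astar A p0. AE \<omega> in M. a \<in> Astar A (q \<omega>)) \<longleftrightarrow> (AE \<omega> in M. q \<omega> \<in> Deltac A p0))"
proof -
  have cA: "compact A" unfolding A_def by (rule A_compact[OF assms(1,3)])
  have nA: "A \<noteq> {}" unfolding A_def by (rule A_nonempty[OF assms(2)])
  have clA: "closed A" using cA compact_imp_closed by blast
  have ps: "prob_space M" and qS: "\<And>\<omega>. \<omega> \<in> space M \<Longrightarrow> q \<omega> \<in> prob_simplex"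
    and qm: "\<And>k. (\<lambda>\<omega>. q \<omega> $ k) \<in> borel_measurable M"
    and qi: "\<And>k. (\<integral>\<omega>. q \<omega> $ k \<partial>M) = p0 $ k"
    using assms(6) unfolding info_structure_def by auto
  interpret prob_space M by (rule ps)
  have qcomp: "0 \<le> q \<omega> $ k \<and> q \<omega> $ k \<le> 1" if "\<omega> \<in> space M" for \<omega> k
  proof -
    have nn: "\<forall>k. 0 \<le> q \<omega> $ k" and s1: "(\<Sum>k\<in>UNIV. q \<omega> $ k) = 1"
      using qS[OF that] unfolding prob_simplex_def by auto
    have "q \<omega> $ k \<le> (\<Sum>k\<in>UNIV. q \<omega> $ k)" by (rule member_le_sum) (use nn in auto)
    then show ?thesis using nn s1 by auto
  qed
  have qnorm: "norm (q \<omega>) \<le> 1" if "\<omega> \<in> space M" for \<omega>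
  proof -
    have nn: "\<forall>k. 0 \<le> q \<omega> $ k" and s1: "(\<Sum>k\<in>UNIV. q \<omega> $ k) = 1"
      using qS[OF that] unfolding prob_simplex_def by auto
    have "norm (q \<omega>) \<le> (\<Sum>k\<in>UNIV. \<bar>q \<omega> $ k\<bar>)" by (rule norm_le_l1_cart)
    also have "\<dots> = 1" using nn s1 by simp
    finally show ?thesis .
  qed
  have qmeas: "q \<in> borel_measurable M"
  proof (rule borel_measurable_euclidean_space[THEN iffD2], rule ballI)
    fix i :: "real^'k" assume "i \<in> Basis"
    then have "i \<in> (\<Union>k. \<Union>u\<in>Basis. {axis k u})" by (simp only: Basis_vec_def)
    then obtain k and u :: real where u: "u \<in> Basis" "i = axis k u" by blast
    then have k: "i = axis k 1" by (simp add: Basis_real_def)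
    have "\<And>x. q x \<bullet> i = q x $ k" unfolding k inner_axis by simp
    then show "(\<lambda>x. q x \<bullet> i) \<in> borel_measurable M" using qm[of k] by presburger
  qed
  have vmeas: "(\<lambda>\<omega>. vA A (q \<omega>)) \<in> borel_measurable M"
    by (rule measurable_compose[OF qmeas borel_measurable_continuous_onI[OF vA_cont[OF cA nA]]])
  obtain B where B: "\<forall>a\<in>A. norm a \<le> B" "B \<ge> 0"
  proof -
    obtain B0 where "\<forall>a\<in>A. norm a \<le> B0"
      using compact_imp_bounded[OF cA] unfolding bounded_iff by blast
    then have "\<forall>a\<in>A. norm a \<le> max B0 0" "max B0 0 \<ge> 0" by auto
    then show ?thesis using that by blast
  qed
  have vint: "integrable M (\<lambda>\<omega>. vA A (q \<omega>))"
  proof (rule integrable_const_bound[where B=B])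
    show "AE \<omega> in M. norm (vA A (q \<omega>)) \<le> B"
    proof (rule AE_I2)
      fix \<omega> assume w: "\<omega> \<in> space M"
      have "\<bar>vA A (q \<omega>)\<bar> \<le> norm (q \<omega>) * B" by (rule vA_bound[OF cA nA B(1)])
      also have "\<dots> \<le> 1 * B" using qnorm[OF w] B(2) by (rule mult_right_mono)
      finally show "norm (vA A (q \<omega>)) \<le> B" by simp
    qed
  qed (rule vmeas)
  have cint: "integrable M (\<lambda>\<omega>. q \<omega> $ k)" for k
  proof (rule integrable_const_bound[where B=1])
    show "AE \<omega> in M. norm (q \<omega> $ k) \<le> 1" by (rule AE_I2) (use qcomp in simp)
  qed (rule qm)
  have lin: "integrable M (\<lambda>\<omega>. q \<omega> \<bullet> a) \<and> (\<integral>\<omega>. q \<omega> \<bullet> a \<partial>M) = p0 \<bullet> a" for a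
  proof -
    have eq: "(\<lambda>\<omega>. q \<omega> \<bullet> a) = (\<lambda>\<omega>. \<Sum>k\<in>UNIV. q \<omega> $ k * a $ k)"
      by (simp add: inner_vec_def)
    have "integrable M (\<lambda>\<omega>. \<Sum>k\<in>UNIV. q \<omega> $ k * a $ k)"
      by (intro Bochner_Integration.integrable_sum integrable_mult_left cint)
    moreover have "(\<integral>\<omega>. (\<Sum>k\<in>UNIV. q \<omega> $ k * a $ k) \<partial>M) = (\<Sum>k\<in>UNIV. p0 $ k * a $ k)"
      using cint qi by (simp add: Bochner_Integration.integral_sum)
    ultimately show ?thesis unfolding eq by (simp add: inner_vec_def)
  qed
  have K: "VoI A M q p0 = 0 \<longleftrightarrow> (AE \<omega> in M. a \<in> Astar A (q \<omega>))" if a: "a \<in> Astar A p0" for a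
  proof -
    have aA: "a \<in> A" using a unfolding Astar_def by auto
    have fint: "integrable M (\<lambda>\<omega>. vA A (q \<omega>) - q \<omega> \<bullet> a)"
      by (intro Bochner_Integration.integrable_diff vint conjunct1[OF lin])
    have "(\<integral>\<omega>. (vA A (q \<omega>) - q \<omega> \<bullet> a) \<partial>M) = VoI A M q p0"
      using vint lin[of a] vA_eq[OF a] unfolding VoI_def
      by (simp add: Bochner_Integration.integral_diff)
    moreover have "AE \<omega> in M. 0 \<le> vA A (q \<omega>) - q \<omega> \<bullet> a"
      by (rule AE_I2) (use vA_ge[OF cA nA aA] in simp)
    ultimately have I: "VoI A M q p0 = 0 \<longleftrightarrow> (AE \<omega> in M. vA A (q \<omega>) - q \<omega> \<bullet> a = 0)"
      using integral_nonneg_eq_0_iff_AE[OF fint] by simp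
    have "(vA A (q \<omega>) - q \<omega> \<bullet> a = 0) \<longleftrightarrow> a \<in> Astar A (q \<omega>)" for \<omega>
    proof
      assume z: "vA A (q \<omega>) - q \<omega> \<bullet> a = 0"
      have "q \<omega> \<bullet> a' \<le> q \<omega> \<bullet> a" if "a' \<in> A" for a'
        using vA_ge[OF cA nA that, of "q \<omega>"] z by simp
      then show "a \<in> Astar A (q \<omega>)" using aA unfolding Astar_def by blast
    next
      assume "a \<in> Astar A (q \<omega>)"
      then show "vA A (q \<omega>) - q \<omega> \<bullet> a = 0" using vA_eq by simp
    qed
    then show ?thesis using I by simp
  qed
  obtain a0 where a0: "a0 \<in> Astar A p0" using Astar_ne[OF cA nA] by blast
  have a0A: "a0 \<in> A" using a0 unfolding Astar_def by auto
  have P1: "VoI A M q p0 = 0 \<longleftrightarrow> (\<exists>a\<in>Astar A p0. AE \<omega> in M. a \<in> Astar A (q \<omega>))"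
    using K a0 by blast
  have P2: "(\<exists>a\<in>Astar A p0. AE \<omega> in M. a \<in> Astar A (q \<omega>)) \<longleftrightarrow> (AE \<omega> in M. q \<omega> \<in> Deltac A p0)"
  proof
    assume "\<exists>a\<in>Astar A p0. AE \<omega> in M. a \<in> Astar A (q \<omega>)"
    then have V: "VoI A M q p0 = 0" using K by blast
    obtain T where T: "countable T" "T \<subseteq> Astar A p0" "Astar A p0 \<subseteq> closure T"
      using separable by blast
    have "\<forall>a\<in>T. AE \<omega> in M. a \<in> Astar A (q \<omega>)" using K V T(2) by blast
    then have "AE \<omega> in M. \<forall>a\<in>T. a \<in> Astar A (q \<omega>)" using AE_ball_countable[OF T(1), of "\<lambda>\<omega> a. a \<in> Astar A (q \<omega>)"] by simp
    with AE_space show "AE \<omega> in M. q \<omega> \<in> Deltac A p0"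
    proof eventually_elim
      case (elim \<omega>)
      then have w: "\<omega> \<in> space M" and all: "\<forall>a\<in>T. a \<in> Astar A (q \<omega>)" by auto
      have "closure T \<subseteq> Astar A (q \<omega>)"
        using all by (intro closure_minimal Astar_closed clA) auto
      then have "Astar A p0 \<subseteq> Astar A (q \<omega>)" using T(3) by blast
      then show "q \<omega> \<in> Deltac A p0"
        using qS[OF w] unfolding Deltac_def Deltastar_def Astar_def by blast
    qed
  next
    assume "AE \<omega> in M. q \<omega> \<in> Deltac A p0"
    then have "AE \<omega> in M. a0 \<in> Astar A (q \<omega>)"
      by eventually_elim (use a0 a0A in \<open>auto simp: Deltac_def Deltastar_def Astar_def\<close>)
    then show "\<exists>a\<in>Astar A p0. AE \<omega> in M. a \<in> Astar A (q \<omega>)" using a0 by blast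
  qed
  show ?thesis using P1 P2 by blast
qed

end
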